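(* Let ${\bf a}=(a_1,\dots,a_n)\in(\mathbb C^* )^n$ and $ev_{\bf a}:\mathfrak{OA}\to\bigoplus^n\mathfrak{sl}_2$, $X\mapsto(ev_{a_1}(X),\dots,ev_{a_n}(X))$. Then $\ker(ev_{\bf a})=\mathfrak I_{U_{\bf a}(t)}$. Moreover $ev_{\bf a}$ is surjective if and only if $a_j\neq\pm1$ for all $j$ and $a_j\neq a_k^{\pm1}$ for all $j\neq k$.
   Context: Work over $\mathbb C$. $\mathfrak{sl}_2$ has basis $e,f,h$ with $[e,f]=h$, $[h,e]=2e$, $[h,f]=-2f$. The Onsager algebra is the Lie subalgebra $\mathfrak{OA}=\{p(t)e+p(t^{-1})f+q(t)h:\ p,q\in\mathbb C[t,t^{-1}],\ q(t^{-1})=-q(t)\}$ of the loop algebra $\mathbb C[t,t^{-1}]\otimes\mathfrak{sl}_2$. For $a\in\mathbb C^*$, $ev_a:\mathfrak{OA}\to\mathfrak{sl}_2$, $p(t)x\mapsto p(a)x$; $U_a(t)=t^2-(a+a^{-1})t+1$ if $a^2\neq1$ and $U_a(t)=t-a$ if $a=\pm1$ (note $U_a=U_{a^{-1}}$). $U_{\bf a}(t)$ is the product of the distinct polynomials among $U_{a_1}(t),\dots,U_{a_n}(t)$. For a reciprocal polynomial $P$ (nonconstant monic with $P(t)=\pm t^{\deg P}P(t^{-1})$), $\mathfrak I_{P(t)}=\{p(t)e+p(t^{-1})f+q(t)h\in\mathfrak{OA}:\ p(t),q(t)\in P(t)\mathbb C[t,t^{-1}]\}$. *)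

theory Defs
  imports "HOL-Computational_Algebra.Formal_Laurent_Series" "HOL-Computational_Algebra.Polynomial_FPS"
begin

definition lpoly :: "complex fls \<Rightarrow> bool" where
  "lpoly f \<longleftrightarrow> finite {n. fls_nth f n \<noteq> 0}"

definition lp_eval :: "complex fls \<Rightarrow> complex \<Rightarrow> complex" where
  "lp_eval f a = (\<Sum>n\<in>{n. fls_nth f n \<noteq> 0}. fls_nth f n * a powi n)"

text \<open>The substitution p(t) to p(t^-1) (meaningful for Laurent polynomials).\<close>
definition lp_refl :: "complex fls \<Rightarrow> complex fls" where
  "lp_refl f = Abs_fls (\<lambda>n. fls_nth f (- n))"

definition lp_of_poly :: "complex poly \<Rightarrow> complex fls" where
  "lp_of_poly P = fps_to_fls (fps_of_poly P)"

text \<open>Elements of the loop algebra C[t,t^-1] (x) sl2 are triples (A,B,C) standing for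
  A e + B f + C h.  The Onsager algebra:\<close>
definition OA :: "(complex fls \<times> complex fls \<times> complex fls) set" where
  "OA = {(p, lp_refl p, q) | p q. lpoly p \<and> lpoly q \<and> lp_refl q = - q}"

text \<open>Elements of sl2 are coordinate triples w.r.t. the basis e, f, h.\<close>
definition ev :: "complex \<Rightarrow> complex fls \<times> complex fls \<times> complex fls \<Rightarrow> complex \<times> complex \<times> complex" where
  "ev a X = (case X of (A, B, C) \<Rightarrow> (lp_eval A a, lp_eval B a, lp_eval C a))"

definition ev_list :: "complex list \<Rightarrow> complex fls \<times> complex fls \<times> complex fls \<Rightarrow> (complex \<times> complex \<times> complex) list" where
  "ev_list as X = map (\<lambda>a. ev a X) as"

definition U :: "complex \<Rightarrow> complex poly" where
  "U a = (if a\<^sup>2 \<noteq> 1 then [:1, - (a + inverse a), 1:] else [:- a, 1:])"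

definition U_list :: "complex list \<Rightarrow> complex poly" where
  "U_list as = \<Prod> (U ` set as)"

definition I_P :: "complex poly \<Rightarrow> (complex fls \<times> complex fls \<times> complex fls) set" where
  "I_P P = {X \<in> OA. case X of (p, _, q) \<Rightarrow>
      (\<exists>r. lpoly r \<and> p = lp_of_poly P * r) \<and> (\<exists>s. lpoly s \<and> q = lp_of_poly P * s)}"

end

theory Submission
  imports Defs
begin
unbundle fps_syntax
notation fls_nth (infixl \<open>$$\<close> 75)

lemma lpoly_supp_finite: "lpoly f \<Longrightarrow> finite {n. f $$ n \<noteq> 0}" by (simp add: lpoly_def)

lemma lp_eval_superset:
  assumes "finite S" "{n. f $$ n \<noteq> 0} \<subseteq> S"
  shows "lp_eval f a = (\<Sum>n\<in>S. f $$ n * a powi n)"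
  unfolding lp_eval_def
  by (rule sum.mono_neutral_left) (use assms in auto)

lemma lp_refl_nth:
  assumes "lpoly f" shows "lp_refl f $$ n = f $$ (- n)"
proof -
  have fin: "finite {n. f $$ n \<noteq> 0}" using assms lpoly_def by auto
  have "finite {k::nat. f $$ (- (- int k)) \<noteq> 0}"
    by (rule finite_subset[of _ "nat ` {n. f $$ n \<noteq> 0}"]) (use fin in \<open>auto simp: image_iff intro!: exI[of _ "int _"]\<close>)
  hence "\<forall>\<^sub>\<infinity>k. (\<lambda>n. f $$ (- n)) (- int k) = 0"
    by (simp add: eventually_cofinite)
  thus ?thesis unfolding lp_refl_def by simp
qed

lemma lpoly_refl: assumes "lpoly f" shows "lpoly (lp_refl f)"
proof -
  have "{n. lp_refl f $$ n \<noteq> 0} = uminus ` {n. f $$ n \<noteq> 0}"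
    using lp_refl_nth[OF assms] by (auto simp: image_iff intro!: exI[of _ "- _"])
  thus ?thesis using assms by (simp add: lpoly_def)
qed

lemma lp_refl_refl: "lpoly f \<Longrightarrow> lp_refl (lp_refl f) = f"
  by (rule fls_eqI) (simp add: lp_refl_nth lpoly_refl)

lemma lpoly_add: "lpoly f \<Longrightarrow> lpoly g \<Longrightarrow> lpoly (f + g)"
  unfolding lpoly_def by (rule finite_subset[of _ "{n. f $$ n \<noteq> 0} \<union> {n. g $$ n \<noteq> 0}"]) auto
lemma lpoly_uminus: "lpoly f \<Longrightarrow> lpoly (- f)"
  unfolding lpoly_def by simp
lemma lpoly_diff: "lpoly f \<Longrightarrow> lpoly g \<Longrightarrow> lpoly (f - g)"
  unfolding lpoly_def by (rule finite_subset[of _ "{n. f $$ n \<noteq> 0} \<union> {n. g $$ n \<noteq> 0}"]) auto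

lemma lp_refl_diff: "lpoly f \<Longrightarrow> lpoly g \<Longrightarrow> lp_refl (f - g) = lp_refl f - lp_refl g"
  by (rule fls_eqI) (simp add: lp_refl_nth lpoly_diff)
lemma lp_refl_uminus: "lpoly f \<Longrightarrow> lp_refl (- f) = - lp_refl f"
  by (rule fls_eqI) (simp add: lp_refl_nth lpoly_uminus)

lemma lp_eval_add: "lpoly f \<Longrightarrow> lpoly g \<Longrightarrow> lp_eval (f + g) a = lp_eval f a + lp_eval g a"
proof -
  assume "lpoly f" "lpoly g"
  let ?S = "{n. f $$ n \<noteq> 0} \<union> {n. g $$ n \<noteq> 0}"
  have fin: "finite ?S" using \<open>lpoly f\<close> \<open>lpoly g\<close> by (simp add: lpoly_def)
  have "lp_eval (f + g) a = (\<Sum>n\<in>?S. (f+g) $$ n * a powi n)" by (rule lp_eval_superset[OF fin]) auto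
  also have "\<dots> = (\<Sum>n\<in>?S. f $$ n * a powi n) + (\<Sum>n\<in>?S. g $$ n * a powi n)"
    by (simp add: distrib_right sum.distrib)
  also have "\<dots> = lp_eval f a + lp_eval g a"
    by (subst (1 2) lp_eval_superset[OF fin]) auto
  finally show ?thesis .
qed

lemma lp_eval_uminus: "lp_eval (- f) a = - lp_eval f a"
  unfolding lp_eval_def by (simp add: sum_negf)

lemma lp_eval_diff: "lpoly f \<Longrightarrow> lpoly g \<Longrightarrow> lp_eval (f - g) a = lp_eval f a - lp_eval g a"
  using lp_eval_add[of f "- g" a] lpoly_uminus[of g] by (simp add: lp_eval_uminus)

lemma lp_eval_refl:
  assumes "lpoly f" shows "lp_eval (lp_refl f) a = lp_eval f (inverse a)"
proof -
  have "lp_eval (lp_refl f) a = (\<Sum>n\<in>uminus ` {n. f $$ n \<noteq> 0}. lp_refl f $$ n * a powi n)"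
    by (rule lp_eval_superset) (use assms in \<open>auto simp: lp_refl_nth lpoly_def image_iff intro!: exI[of _ "- _"]\<close>)
  also have "\<dots> = (\<Sum>n\<in>{n. f $$ n \<noteq> 0}. f $$ n * a powi (- n))"
    by (subst sum.reindex) (auto simp: inj_on_def lp_refl_nth assms)
  also have "\<dots> = lp_eval f (inverse a)"
    unfolding lp_eval_def by (simp add: power_int_minus power_int_inverse)
  finally show ?thesis .
qed

lemma lp_eval_shift_poly:
  assumes "a \<noteq> 0"
  shows "lp_eval (fls_shift m (lp_of_poly P)) a = a powi (- m) * poly P a"
proof -
  let ?S = "(\<lambda>i. int i - m) ` {..degree P}"
  have "lp_eval (fls_shift m (lp_of_poly P)) a = (\<Sum>n\<in>?S. fls_shift m (lp_of_poly P) $$ n * a powi n)"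
  proof (rule lp_eval_superset)
    show "{n. fls_shift m (lp_of_poly P) $$ n \<noteq> 0} \<subseteq> ?S"
    proof
      fix n assume "n \<in> {n. fls_shift m (lp_of_poly P) $$ n \<noteq> 0}"
      hence h: "n + m \<ge> 0" "coeff P (nat (n + m)) \<noteq> 0" by (auto simp: lp_of_poly_def split: if_splits)
      hence "nat (n+m) \<le> degree P" using le_degree by blast
      thus "n \<in> ?S" using h by (auto simp: image_iff intro!: bexI[of _ "nat (n+m)"])
    qed
  qed auto
  also have "\<dots> = (\<Sum>i\<le>degree P. coeff P i * (a ^ i * a powi (- m)))"
    by (subst sum.reindex) (auto simp: inj_on_def lp_of_poly_def power_int_diff assms power_int_minus divide_inverse mult_ac)
  also have "\<dots> = a powi (- m) * poly P a"
    by (simp add: poly_altdef sum_distrib_left mult_ac)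
  finally show ?thesis .
qed

lemma lpoly_shift_poly: "lpoly (fls_shift m (lp_of_poly P))"
proof -
  have "{n. fls_shift m (lp_of_poly P) $$ n \<noteq> 0} \<subseteq> (\<lambda>i. int i - m) ` {..degree P}"
  proof
    fix n assume "n \<in> {n. fls_shift m (lp_of_poly P) $$ n \<noteq> 0}"
    hence h: "n + m \<ge> 0" "coeff P (nat (n + m)) \<noteq> 0" by (auto simp: lp_of_poly_def split: if_splits)
    hence "nat (n+m) \<le> degree P" using le_degree by blast
    thus "n \<in> (\<lambda>i. int i - m) ` {..degree P}" using h by (auto simp: image_iff intro!: bexI[of _ "nat (n+m)"])
  qed
  thus ?thesis unfolding lpoly_def by (rule finite_subset) auto
qed

lemma lpoly_rep:
  assumes "lpoly f" shows "\<exists>P m. f = fls_shift m (lp_of_poly P)"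
proof -
  let ?S = "{n. f $$ n \<noteq> 0}"
  have fin: "finite ?S" using assms lpoly_def by auto
  define N where "N = nat (Max (insert 0 (abs ` ?S)))"
  have N: "\<bar>n\<bar> \<le> int N" if "f $$ n \<noteq> 0" for n
  proof -
    have "\<bar>n\<bar> \<le> Max (insert 0 (abs ` ?S))" using fin that by (intro Max_ge) auto
    thus ?thesis unfolding N_def by linarith
  qed
  define P where "P = truncate_fps (2*N+1) (Abs_fps (\<lambda>k. f $$ (int k - int N)))"
  have "f = fls_shift (int N) (lp_of_poly P)"
  proof (rule fls_eqI)
    fix n
    show "f $$ n = fls_shift (int N) (lp_of_poly P) $$ n"
    proof (cases "f $$ n = 0")
      case True
      thus ?thesis by (auto simp: lp_of_poly_def P_def coeff_truncate_fps)
    next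
      case False
      with N[OF this] show ?thesis by (auto simp: lp_of_poly_def P_def coeff_truncate_fps)
    qed
  qed
  thus ?thesis by blast
qed


lemma lp_of_poly_mult: "lp_of_poly (P * Q) = lp_of_poly P * lp_of_poly Q"
  by (simp add: lp_of_poly_def fps_of_poly_mult fls_times_fps_to_fls)

lemma lpoly_poly: "lpoly (lp_of_poly P)"
  using lpoly_shift_poly[of 0 P] by simp

lemma lp_eval_poly: "a \<noteq> 0 \<Longrightarrow> lp_eval (lp_of_poly P) a = poly P a"
  using lp_eval_shift_poly[of a 0 P] by simp

lemma lpoly_mult_eval:
  assumes "lpoly f" "lpoly g" "a \<noteq> 0"
  shows "lpoly (f * g) \<and> lp_eval (f * g) a = lp_eval f a * lp_eval g a"
proof -
  obtain P m where f: "f = fls_shift m (lp_of_poly P)" using lpoly_rep[OF assms(1)] by blast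
  obtain Q k where g: "g = fls_shift k (lp_of_poly Q)" using lpoly_rep[OF assms(2)] by blast
  have fg: "f * g = fls_shift (m + k) (lp_of_poly (P * Q))"
    by (simp add: f g fls_shifted_times_simps lp_of_poly_mult add.commute)
  have "lpoly (f*g)" unfolding fg by (rule lpoly_shift_poly)
  moreover have "lp_eval (f * g) a = lp_eval f a * lp_eval g a"
  proof -
    have "lp_eval (f*g) a = a powi (-(m+k)) * poly (P*Q) a" unfolding fg by (rule lp_eval_shift_poly[OF assms(3)])
    moreover have "lp_eval f a = a powi (-m) * poly P a" unfolding f by (rule lp_eval_shift_poly[OF assms(3)])
    moreover have "lp_eval g a = a powi (-k) * poly Q a" unfolding g by (rule lp_eval_shift_poly[OF assms(3)])
    moreover have "a powi (-(m+k)) = a powi (-m) * a powi (-k)"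
      using assms(3) by (simp add: power_int_add[symmetric])
    ultimately show ?thesis by (simp add: mult_ac)
  qed
  ultimately show ?thesis by blast
qed

lemma roots_prod_dvd:
  fixes Q :: "complex poly"
  assumes "finite R" "\<forall>c\<in>R. poly Q c = 0"
  shows "(\<Prod>c\<in>R. [:-c,1:]) dvd Q"
  using assms
proof (induction R arbitrary: Q rule: finite_induct)
  case empty thus ?case by simp
next
  case (insert c R)
  have "[:-c,1:] dvd Q" using insert.prems by (simp add: poly_eq_0_iff_dvd)
  then obtain Q' where Q: "Q = [:-c,1:] * Q'" by (elim dvdE)
  have "\<forall>d\<in>R. poly Q' d = 0"
  proof
    fix d assume "d \<in> R"
    hence "d \<noteq> c" "poly Q d = 0" using insert by auto
    thus "poly Q' d = 0" by (simp add: Q)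
  qed
  hence "(\<Prod>c\<in>R. [:-c,1:]) dvd Q'" using insert.IH by blast
  hence "[:-c,1:] * (\<Prod>c\<in>R. [:-c,1:]) dvd Q" unfolding Q by (rule mult_dvd_mono[OF dvd_refl])
  thus ?case using insert(1,2) by (subst prod.insert) auto
qed

lemma lp_dvd:
  assumes "lpoly p" "finite R" "\<forall>c\<in>R. c \<noteq> 0 \<and> lp_eval p c = 0"
  shows "\<exists>r. lpoly r \<and> p = lp_of_poly (\<Prod>c\<in>R. [:-c,1:]) * r"
proof -
  obtain Q m where p: "p = fls_shift m (lp_of_poly Q)" using lpoly_rep[OF assms(1)] by blast
  have "\<forall>c\<in>R. poly Q c = 0"
    using assms(3) by (auto simp: p lp_eval_shift_poly)
  hence "(\<Prod>c\<in>R. [:-c,1:]) dvd Q" using roots_prod_dvd[OF assms(2)] by blast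
  then obtain Q' where "Q = (\<Prod>c\<in>R. [:-c,1:]) * Q'" by (elim dvdE)
  hence "p = lp_of_poly (\<Prod>c\<in>R. [:-c,1:]) * fls_shift m (lp_of_poly Q')"
    by (simp add: p lp_of_poly_mult fls_shifted_times_simps)
  thus ?thesis using lpoly_shift_poly by blast
qed

lemma interp:
  fixes w :: "complex \<Rightarrow> complex"
  assumes "finite S"
  shows "\<exists>P. \<forall>c\<in>S. poly P c = w c"
  using assms
proof (induction S rule: finite_induct)
  case empty thus ?case by simp
next
  case (insert c S)
  then obtain P where P: "\<forall>d\<in>S. poly P d = w d" by blast
  define L where "L = (\<Prod>d\<in>S. [:-d,1:])"
  have L0: "poly L d = 0" if "d \<in> S" for d
    unfolding L_def poly_prod using insert(1) that by (auto intro: prod_zero)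
  have Lc: "poly L c \<noteq> 0"
    unfolding L_def poly_prod using insert by auto
  define P' where "P' = P + smult ((w c - poly P c) / poly L c) L"
  have "\<forall>d\<in>insert c S. poly P' d = w d"
    using P L0 Lc by (auto simp: P'_def)
  thus ?case by blast
qed

lemma U_prod:
  assumes "a \<noteq> 0" shows "U a = (\<Prod>c\<in>{a, inverse a}. [:-c,1:])"
proof (cases "a\<^sup>2 = 1")
  case True
  hence "inverse a = a" using assms by (metis inverse_unique power2_eq_square)
  thus ?thesis using True by (simp add: U_def)
next
  case False
  hence "inverse a \<noteq> a" using assms by (metis left_inverse power2_eq_square)
  thus ?thesis using False assms by (simp add: U_def algebra_simps)
qed


lemma roots_prod_linear:
  fixes B :: "complex set"
  assumes "finite B" shows "{x. poly (\<Prod>c\<in>B. [:-c,1:]) x = 0} = B"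
  using assms by (auto simp: poly_prod)

lemma U_list_eq:
  assumes "\<forall>a\<in>set as. a \<noteq> 0"
  shows "U_list as = (\<Prod>c\<in>set as \<union> inverse ` set as. [:-c,1:])"
proof -
  define g where "g = (\<lambda>a::complex. {a, inverse a})"
  define h where "h = (\<lambda>B::complex set. \<Prod>c\<in>B. [:-c,1:])"
  have fin: "\<forall>B\<in>g ` set as. finite B" by (auto simp: g_def)
  have "U ` set as = h ` (g ` set as)"
    unfolding image_image using assms by (auto simp: U_prod g_def h_def intro!: image_cong)
  hence "U_list as = prod h (g ` set as)"
    unfolding U_list_def
  proof (simp, subst prod.reindex)
    show "inj_on h (g ` set as)"
    proof (rule inj_onI)
      fix A B assume "A \<in> g ` set as" "B \<in> g ` set as" "h A = h B"
      thus "A = B" using roots_prod_linear fin unfolding h_def by metis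
    qed
  qed simp
  also have "\<dots> = (\<Prod>c\<in>\<Union>(g ` set as). [:-c,1:])"
    unfolding h_def
  proof -
    have "\<forall>A\<in>g ` set as. \<forall>B\<in>g ` set as. A \<noteq> B \<longrightarrow> A \<inter> B = {}"
      using assms by (auto simp: g_def)
    from prod.Union_disjoint[OF fin this, of "\<lambda>c. [:-c,1:]"]
    show "(\<Prod>B\<in>g ` set as. \<Prod>c\<in>B. [:- c, 1:]) = (\<Prod>c\<in>\<Union> (g ` set as). [:- c, 1:])" by (simp add: o_def)
  qed
  also have "\<Union>(g ` set as) = set as \<union> inverse ` set as" by (auto simp: g_def)
  finally show ?thesis .
qed


lemma map_eq_replicate_iff: "map f xs = replicate (length xs) c \<longleftrightarrow> (\<forall>x\<in>set xs. f x = c)"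
  by (induct xs) auto

lemma poly_U_list_zero:
  assumes "\<forall>a\<in>set as. a \<noteq> 0" "a \<in> set as"
  shows "poly (U_list as) a = 0 \<and> poly (U_list as) (inverse a) = 0"
  unfolding U_list_eq[OF assms(1)] poly_prod using assms(2)
  by (auto intro!: prod_zero)

lemma kernel_part:
  assumes nz: "\<forall>a\<in>set as. a \<noteq> 0"
  shows "{X \<in> OA. ev_list as X = replicate (length as) (0, 0, 0)} = I_P (U_list as)"
proof
  show "{X \<in> OA. ev_list as X = replicate (length as) (0, 0, 0)} \<subseteq> I_P (U_list as)"
  proof
    fix X assume X: "X \<in> {X \<in> OA. ev_list as X = replicate (length as) (0, 0, 0)}"
    then obtain p q where Xe: "X = (p, lp_refl p, q)" and pq: "lpoly p" "lpoly q" "lp_refl q = - q"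
      by (auto simp: OA_def)
    have z: "lp_eval p a = 0 \<and> lp_eval (lp_refl p) a = 0 \<and> lp_eval q a = 0" if "a \<in> set as" for a
      using X that unfolding ev_list_def map_eq_replicate_iff by (auto simp: Xe ev_def)
    let ?R = "set as \<union> inverse ` set as"
    have zp: "\<forall>c\<in>?R. c \<noteq> 0 \<and> lp_eval p c = 0"
      using z nz by (auto simp: lp_eval_refl[OF pq(1), symmetric])
    have zq: "\<forall>c\<in>?R. c \<noteq> 0 \<and> lp_eval q c = 0"
      using z nz by (auto simp: lp_eval_refl[OF pq(2), symmetric] pq(3) lp_eval_uminus)
    show "X \<in> I_P (U_list as)"
      using X lp_dvd[OF pq(1) _ zp] lp_dvd[OF pq(2) _ zq] unfolding I_P_def U_list_eq[OF nz]
      by (auto simp: Xe)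
  qed
next
  show "I_P (U_list as) \<subseteq> {X \<in> OA. ev_list as X = replicate (length as) (0, 0, 0)}"
  proof
    fix X assume X: "X \<in> I_P (U_list as)"
    then obtain p q r s where Xe: "X = (p, lp_refl p, q)" and pq: "lpoly p" "lpoly q" "lp_refl q = - q"
      and rs: "lpoly r" "lpoly s" "p = lp_of_poly (U_list as) * r" "q = lp_of_poly (U_list as) * s"
      by (auto simp: OA_def I_P_def)
    have "ev a X = (0,0,0)" if a: "a \<in> set as" for a
    proof -
      have a0: "a \<noteq> 0" "inverse a \<noteq> 0" using nz a by auto
      have "lp_eval p c = 0" if "c \<noteq> 0" "poly (U_list as) c = 0" for c
        using lpoly_mult_eval[OF lpoly_poly rs(1) that(1)] that by (simp add: rs(3) lp_eval_poly)
      hence 1: "lp_eval p a = 0" "lp_eval p (inverse a) = 0"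
        using poly_U_list_zero[OF nz a] a0 by auto
      have "lp_eval q a = 0"
        using lpoly_mult_eval[OF lpoly_poly rs(2) a0(1)] poly_U_list_zero[OF nz a] a0
        by (simp add: rs(4) lp_eval_poly)
      thus ?thesis using 1 by (simp add: Xe ev_def lp_eval_refl[OF pq(1)])
    qed
    thus "X \<in> {X \<in> OA. ev_list as X = replicate (length as) (0, 0, 0)}"
      using X unfolding I_P_def ev_list_def map_eq_replicate_iff by auto
  qed
qed


lemma ev_list_nth: "j < length as \<Longrightarrow> ev_list as X ! j = ev (as ! j) X"
  by (simp add: ev_list_def)

lemma necessity:
  assumes nz: "\<forall>a\<in>set as. a \<noteq> 0"
    and surj: "\<forall>v. length v = length as \<longrightarrow> (\<exists>X\<in>OA. ev_list as X = v)"
  shows "(\<forall>j<length as. as ! j \<noteq> 1 \<and> as ! j \<noteq> -1) \<and>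
         (\<forall>j<length as. \<forall>k<length as. j \<noteq> k \<longrightarrow> as ! j \<noteq> as ! k \<and> as ! j \<noteq> inverse (as ! k))"
proof -
  define n where "n = length as"
  define e1 where "e1 j = (replicate n (0::complex,0::complex,0::complex))[j := (1,0,0)]" for j
  have e1len: "length (e1 j) = length as" for j by (simp add: e1_def n_def)
  have e1nth: "e1 j ! i = (if i = j then (1,0,0) else (0,0,0))" if "i < n" "j < n" for i j
    using that by (simp add: e1_def)
  have obt: "\<exists>p q. lpoly p \<and> (\<forall>i<n. ev (as ! i) (p, lp_refl p, q) = e1 j ! i)" for j
  proof -
    obtain X where X: "X \<in> OA" "ev_list as X = e1 j" using surj e1len by blast
    then obtain p q where Xe: "X = (p, lp_refl p, q)" "lpoly p" by (auto simp: OA_def)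
    have "\<forall>i<n. ev (as ! i) (p, lp_refl p, q) = e1 j ! i"
      using X(2) Xe(1) by (auto simp: n_def ev_list_nth[symmetric])
    thus ?thesis using Xe(2) by blast
  qed
  have A: "as ! j \<noteq> 1 \<and> as ! j \<noteq> -1" if j: "j < n" for j
  proof
    obtain p q where p: "lpoly p" "\<forall>i<n. ev (as ! i) (p, lp_refl p, q) = e1 j ! i" using obt by blast
    hence "lp_eval p (as!j) = 1" "lp_eval p (inverse (as!j)) = 0"
      using j by (auto simp: e1nth ev_def lp_eval_refl)
    thus "as ! j \<noteq> 1" "as ! j \<noteq> -1" by auto
  qed
  have B: "as ! j \<noteq> as ! k \<and> as ! j \<noteq> inverse (as ! k)" if jk: "j < n" "k < n" "j \<noteq> k" for j k
  proof
    obtain p q where p: "lpoly p" "\<forall>i<n. ev (as ! i) (p, lp_refl p, q) = e1 j ! i" using obt by blast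
    hence 1: "lp_eval p (as!j) = 1" "lp_eval p (as!k) = 0" "lp_eval p (inverse (as!k)) = 0"
      using jk by (auto simp: e1nth ev_def lp_eval_refl)
    thus "as ! j \<noteq> as ! k" "as ! j \<noteq> inverse (as ! k)" by auto
  qed
  show ?thesis using A B by (auto simp: n_def)
qed

lemma sufficiency:
  assumes nz: "\<forall>a\<in>set as. a \<noteq> 0"
    and c1: "\<forall>j<length as. as ! j \<noteq> 1 \<and> as ! j \<noteq> -1"
    and c2: "\<forall>j<length as. \<forall>k<length as. j \<noteq> k \<longrightarrow> as ! j \<noteq> as ! k \<and> as ! j \<noteq> inverse (as ! k)"
    and v: "length v = length as"
  shows "\<exists>X\<in>OA. ev_list as X = v"
proof -
  define n where "n = length as"
  have dist: "distinct as" using c2 by (simp add: distinct_conv_nth)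
  have ninv: "as ! j \<noteq> inverse (as ! k)" if "j < n" "k < n" for j k
  proof (cases "j = k")
    case True
    show ?thesis
    proof
      assume h: "as ! j = inverse (as ! k)"
      have "as ! j \<noteq> 0" using nz that nth_mem by (auto simp: n_def)
      hence "(as ! j)^2 = 1" using h True by (metis power2_eq_square right_inverse)
      hence "as ! j = 1 \<or> as ! j = -1" by (simp add: power2_eq_1_iff)
      thus False using c1 that by (auto simp: n_def)
    qed
  next
    case False thus ?thesis using c2 that by (auto simp: n_def)
  qed
  define idx where "idx c = (SOME j. j < n \<and> as ! j = c)" for c
  have idx: "idx (as ! j) = j" if "j < n" for j
  proof -
    have "idx (as ! j) < n \<and> as ! (idx (as ! j)) = as ! j"
      unfolding idx_def by (rule someI[of _ j]) (use that in auto)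
    thus ?thesis using dist that nth_eq_iff_index_eq by (auto simp: n_def)
  qed
  have notin: "inverse (as ! j) \<notin> set as" if "j < n" for j
    using ninv that by (auto simp: in_set_conv_nth n_def)
  define w1 where "w1 c = (if c \<in> set as then fst (v ! idx c) else fst (snd (v ! idx (inverse c))))" for c
  define w2 where "w2 c = (if c \<in> set as then snd (snd (v ! idx c)) / 2 else - (snd (snd (v ! idx (inverse c))) / 2))" for c
  let ?S = "set as \<union> inverse ` set as"
  obtain P1 where P1: "\<forall>c\<in>?S. poly P1 c = w1 c" using interp[of ?S w1] by auto
  obtain P2 where P2: "\<forall>c\<in>?S. poly P2 c = w2 c" using interp[of ?S w2] by auto
  define p where "p = lp_of_poly P1"
  define g where "g = lp_of_poly P2"
  define q where "q = g - lp_refl g"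
  have lp: "lpoly p" "lpoly g" using lpoly_poly by (auto simp: p_def g_def)
  have lq: "lpoly q" unfolding q_def by (intro lpoly_diff lpoly_refl lp)
  have rq: "lp_refl q = - q"
    unfolding q_def by (simp add: lp_refl_diff lpoly_refl lp lp_refl_refl)
  have XOA: "(p, lp_refl p, q) \<in> OA" using lp lq rq by (auto simp: OA_def)
  have "ev_list as (p, lp_refl p, q) = v"
  proof (rule nth_equalityI)
    show "length (ev_list as (p, lp_refl p, q)) = length v" using v by (simp add: ev_list_def)
  next
    fix j assume "j < length (ev_list as (p, lp_refl p, q))"
    hence j: "j < n" by (simp add: ev_list_def n_def)
    let ?a = "as ! j"
    have a: "?a \<in> set as" "?a \<noteq> 0" "inverse ?a \<noteq> 0" using j nz by (auto simp: n_def)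
    have 1: "lp_eval p ?a = fst (v ! j)" using P1 a idx[OF j] by (simp add: p_def lp_eval_poly w1_def)
    have 2: "lp_eval (lp_refl p) ?a = fst (snd (v ! j))"
      using P1 a idx[OF j] notin[OF j] by (simp add: lp_eval_refl lpoly_poly p_def lp_eval_poly w1_def)
    have 3: "lp_eval q ?a = snd (snd (v ! j))"
      using P2 a idx[OF j] notin[OF j]
      by (simp add: q_def g_def lp_eval_diff lpoly_refl lpoly_poly lp_eval_refl lp_eval_poly w2_def)
    show "ev_list as (p, lp_refl p, q) ! j = v ! j"
      using 1 2 3 j by (simp add: ev_list_nth n_def ev_def prod_eq_iff)
  qed
  thus ?thesis using XOA by blast
qed


theorem lemma14:
  fixes as :: "complex list"
  assumes "\<forall>a\<in>set as. a \<noteq> 0"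
  shows "({X \<in> OA. ev_list as X = replicate (length as) (0, 0, 0)} = I_P (U_list as)) \<and>
    ((\<forall>v. length v = length as \<longrightarrow> (\<exists>X\<in>OA. ev_list as X = v)) \<longleftrightarrow>
           ((\<forall>j<length as. as ! j \<noteq> 1 \<and> as ! j \<noteq> -1) \<and>
            (\<forall>j<length as. \<forall>k<length as. j \<noteq> k \<longrightarrow> as ! j \<noteq> as ! k \<and> as ! j \<noteq> inverse (as ! k))))"
    using kernel_part[OF assms] necessity[OF assms] sufficiency[OF assms] by blast

end
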